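(* Let $\mathbb{F}_q$ be a finite field and let $\mathcal{M}=\mathbb{F}_q\times\mathbb{F}_q^{*}\times\mathbb{F}_q$ with the relation: $(x_1,y_1,z_1)$ and $(x_2,y_2,z_2)$ commute iff $x_1y_2-y_1x_2=z_1-z_2$. Then: (1) every abelian subset of $\mathcal{M}$ has cardinality at most $q$; (2) there is no partition of $\mathcal{M}$ into fewer than $q(q-1)$ abelian subsets; (3) the maximum cardinality of an abelian subset of $\mathcal{M}$ that is not contained in a strictly larger abelian subset is $q$.
   Context: A subset of $\mathcal{M}$ is abelian if any two distinct elements of it commute. *)

theory Defs
  imports Main "HOL-Library.Disjoint_Sets" "HOL-Library.Cardinality"
begin

definition Mset :: "('a::{finite,field} \<times> 'a \<times> 'a) set" where
  "Mset = {(x, y, z). y \<noteq> 0}"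

definition commutes :: "('a::{finite,field} \<times> 'a \<times> 'a) \<Rightarrow> ('a \<times> 'a \<times> 'a) \<Rightarrow> bool" where
  "commutes a b = (case a of (x1, y1, z1) \<Rightarrow> case b of (x2, y2, z2) \<Rightarrow>
      x1 * y2 - y1 * x2 = z1 - z2)"

definition abelian :: "('a::{finite,field} \<times> 'a \<times> 'a) set \<Rightarrow> bool" where
  "abelian S = (S \<subseteq> Mset \<and> (\<forall>a\<in>S. \<forall>b\<in>S. a \<noteq> b \<longrightarrow> commutes a b))"

definition maximal_abelian :: "('a::{finite,field} \<times> 'a \<times> 'a) set \<Rightarrow> bool" where
  "maximal_abelian S = (abelian S \<and> (\<forall>T. abelian T \<and> S \<subseteq> T \<longrightarrow> T = S))"

end

theory Submission
  imports Defs
begin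

lemma comm_eq:
  fixes x1 y1 z1 x2 y2 z2 :: "'a::{finite,field}"
  assumes "abelian S" "(x1,y1,z1) \<in> S" "(x2,y2,z2) \<in> S"
  shows "x1 * y2 - y1 * x2 = z1 - z2"
proof (cases "(x1,y1,z1) = (x2,y2,z2)")
  case True then show ?thesis by auto
next
  case False then show ?thesis using assms unfolding abelian_def commutes_def by fastforce
qed

lemma ab_bound:
  fixes S :: "('a::{finite,field} \<times> 'a \<times> 'a) set"
  assumes ab: "abelian S"
  shows "card S \<le> CARD('a)"
proof (cases "\<exists>a0\<in>S. \<exists>a1\<in>S. a0 \<noteq> a1")
  case False
  then have "card S \<le> Suc 0" by (subst card_le_Suc0_iff_eq) auto
  moreover have "1 \<le> CARD('a)" by (simp add: Suc_leI)
  ultimately show ?thesis by linarith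
next
  case True
  then obtain x0 y0 z0 x1 y1 z1 where a0: "(x0,y0,z0) \<in> S" and a1: "(x1,y1,z1) \<in> S"
    and ne: "(x0,y0,z0) \<noteq> (x1,y1,z1)" by (metis prod_cases3)
  have zf: "z = z0 - x0 * y + y0 * x" if "(x,y,z) \<in> S" for x y z
    using comm_eq[OF ab a0 that] by (simp add: algebra_simps)
  have det: "(x - x0) * (y' - y0) = (y - y0) * (x' - x0)"
    if "(x,y,z) \<in> S" "(x',y',z') \<in> S" for x y z x' y' z'
  proof -
    have "x * y' - y * x' = z - z'" by (rule comm_eq[OF ab that])
    then have h: "x * y' - y * x' = (z0 - x0 * y + y0 * x) - (z0 - x0 * y' + y0 * x')"
      using zf[OF that(1)] zf[OF that(2)] by simp
    have "(x - x0) * (y' - y0) - (y - y0) * (x' - x0) = (x * y' - y * x') - ((z0 - x0 * y + y0 * x) - (z0 - x0 * y' + y0 * x'))"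
      by (simp add: algebra_simps)
    with h show ?thesis by simp
  qed
  have z1: "z1 = z0 - x0 * y1 + y0 * x1" using zf[OF a1] .
  show ?thesis
  proof (cases "x1 - x0 = 0")
    case False
    have "inj_on (\<lambda>(x,y,z). x) S"
    proof (rule inj_onI)
      fix p q assume p: "p \<in> S" and q: "q \<in> S" and e: "(\<lambda>(x,y,z). x) p = (\<lambda>(x,y,z). x) q"
      obtain x y z where pp: "p = (x,y,z)" by (metis prod_cases3)
      obtain x' y' z' where qq: "q = (x',y',z')" by (metis prod_cases3)
      have xe: "x = x'" using e pp qq by simp
      have d1: "(x1 - x0) * (y - y0) = (y1 - y0) * (x - x0)" using det[OF a1 p[unfolded pp]] by simp
      have d2: "(x1 - x0) * (y' - y0) = (y1 - y0) * (x' - x0)" using det[OF a1 q[unfolded qq]] by simp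
      have "(x1 - x0) * (y - y0) = (x1 - x0) * (y' - y0)" using d1 d2 xe by simp
      then have "y = y'" using False by simp
      moreover have "z = z'" using zf[OF p[unfolded pp]] zf[OF q[unfolded qq]] xe \<open>y = y'\<close> by simp
      ultimately show "p = q" using pp qq xe by simp
    qed
    then have "card S = card ((\<lambda>(x,y,z). x) ` S)" by (simp add: card_image)
    also have "\<dots> \<le> CARD('a)" by (rule card_mono) auto
    finally show ?thesis .
  next
    case xz: True
    then have "y1 - y0 \<noteq> 0" using ne z1 by auto
    have "inj_on (\<lambda>(x,y,z). y) S"
    proof (rule inj_onI)
      fix p q assume p: "p \<in> S" and q: "q \<in> S" and e: "(\<lambda>(x,y,z). y) p = (\<lambda>(x,y,z). y) q"
      obtain x y z where pp: "p = (x,y,z)" by (metis prod_cases3)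
      obtain x' y' z' where qq: "q = (x',y',z')" by (metis prod_cases3)
      have ye: "y = y'" using e pp qq by simp
      have d1: "(x1 - x0) * (y - y0) = (y1 - y0) * (x - x0)" using det[OF a1 p[unfolded pp]] by simp
      have d2: "(x1 - x0) * (y' - y0) = (y1 - y0) * (x' - x0)" using det[OF a1 q[unfolded qq]] by simp
      have "(y1 - y0) * (x - x0) = (y1 - y0) * (x' - x0)" using d1 d2 ye xz by auto
      then have "x = x'" using \<open>y1 - y0 \<noteq> 0\<close> by simp
      moreover have "z = z'" using zf[OF p[unfolded pp]] zf[OF q[unfolded qq]] ye \<open>x = x'\<close> by simp
      ultimately show "p = q" using pp qq ye by simp
    qed
    then have "card S = card ((\<lambda>(x,y,z). y) ` S)" by (simp add: card_image)
    also have "\<dots> \<le> CARD('a)" by (rule card_mono) auto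
    finally show ?thesis .
  qed
qed

lemma card_M: "card (Mset :: ('a::{finite,field} \<times> 'a \<times> 'a) set) = CARD('a) * ((CARD('a) - 1) * CARD('a))"
proof -
  have e: "{(x, y, z). (y::'a) \<noteq> 0} = UNIV \<times> ((UNIV - {0}) \<times> UNIV)"
    by auto
  show ?thesis unfolding Mset_def e by (simp add: card_cartesian_product card_Diff_singleton)
qed

theorem theorem6p6:
  shows "(\<forall>S :: ('a::{finite,field} \<times> 'a \<times> 'a) set. abelian S \<longrightarrow> card S \<le> CARD('a))
    \<and> (\<forall>P :: ('a \<times> 'a \<times> 'a) set set. partition_on Mset P \<and> (\<forall>S\<in>P. abelian S)
          \<longrightarrow> CARD('a) * (CARD('a) - 1) \<le> card P)
    \<and> (\<exists>S :: ('a \<times> 'a \<times> 'a) set. maximal_abelian S \<and> card S = CARD('a))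
    \<and> (\<forall>S :: ('a \<times> 'a \<times> 'a) set. maximal_abelian S \<longrightarrow> card S \<le> CARD('a))"
proof (intro conjI allI impI)
  fix S :: "('a \<times> 'a \<times> 'a) set" assume "abelian S" then show "card S \<le> CARD('a)" by (rule ab_bound)
next
  fix S :: "('a \<times> 'a \<times> 'a) set" assume "maximal_abelian S" then show "card S \<le> CARD('a)"
    unfolding maximal_abelian_def using ab_bound by blast
next
  fix P :: "('a \<times> 'a \<times> 'a) set set"
  assume h: "partition_on Mset P \<and> (\<forall>S\<in>P. abelian S)"
  have fin: "finite P" by simp
  have "card (Mset :: ('a \<times> 'a \<times> 'a) set) = card (\<Union>P)" using h by (simp add: partition_on_def)
  also have "\<dots> = (\<Sum>S\<in>P. card S)"
    using h by (intro card_Union_disjoint) (auto simp: partition_on_def)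
  also have "\<dots> \<le> (\<Sum>S\<in>P. CARD('a))" using h ab_bound by (intro sum_mono) blast
  also have "\<dots> = card P * CARD('a)" by simp
  finally have "CARD('a) * (CARD('a) - 1) * CARD('a) \<le> card P * CARD('a)"
    using card_M[where 'a='a] by (simp add: mult.assoc mult.commute mult.left_commute)
  then show "CARD('a) * (CARD('a) - 1) \<le> card P" by simp
next
  let ?S = "(\<lambda>x. (x, 1::'a, x)) ` (UNIV :: 'a set)"
  have ab: "abelian ?S" unfolding abelian_def commutes_def Mset_def by auto
  have c: "card ?S = CARD('a)" by (rule card_image) (auto simp: inj_on_def)
  have "maximal_abelian ?S"
    unfolding maximal_abelian_def
  proof (intro conjI allI impI ab)
    fix T :: "('a \<times> 'a \<times> 'a) set" assume "abelian T \<and> ?S \<subseteq> T"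
    then have "?S \<subseteq> T" "card T \<le> CARD('a)" using ab_bound[of T] by auto
    then have "?S \<subseteq> T" "card T \<le> card ?S" using c by auto
    then have "?S = T" by (intro card_seteq) auto
    then show "T = ?S" by simp
  qed
  then show "\<exists>S :: ('a \<times> 'a \<times> 'a) set. maximal_abelian S \<and> card S = CARD('a)" using c by blast
qed

end
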